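(* Let $\theta>0$ and $1\le p,q<\infty$. Then the grand amalgam Lebesgue function space $l^{q),\theta}(L^p)$ is a Banach space with respect to the norm $\|\cdot\|_{p,q),\theta}$.
   Context: Let $X$ denote one of $\mathbb N$, $\mathbb N_0$ or $\mathbb Z$, and for $k\in X$ let $I_k=[k,k+1)$. For $1\le p,q<\infty$ and $\theta>0$, $l^{q),\theta}(L^p)$ is the set of all complex-valued measurable functions $g$ on $\bigcup_{k\in X}I_k$ with $g\chi_{I_k}\in L^p$ for each $k\in X$ and $$\|g\|_{p,q),\theta}:=\sup_{\varepsilon>0}\Big(\varepsilon^{\theta}\sum_{k\in X}\Big(\int_k^{k+1}|g(x)|^p\,dx\Big)^{\frac{q(1+\varepsilon)}{p}}\Big)^{\frac{1}{q(1+\varepsilon)}}<\infty$$ (functions equal a.e. identified). *)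

theory Defs
  imports "HOL-Analysis.Analysis"
begin

definition admissible_index :: "int set \<Rightarrow> bool" where
  "admissible_index K \<longleftrightarrow> K = {1..} \<or> K = {0..} \<or> K = UNIV"

definition Ik :: "int \<Rightarrow> real set" where
  "Ik k = {real_of_int k..<real_of_int k + 1}"

definition dom_am :: "int set \<Rightarrow> real set" where
  "dom_am K = (\<Union>k\<in>K. Ik k)"

definition loc_int :: "real \<Rightarrow> (real \<Rightarrow> complex) \<Rightarrow> int \<Rightarrow> ennreal" where
  "loc_int p g k = (\<integral>\<^sup>+ x\<in>Ik k. ennreal (cmod (g x) powr p) \<partial>lebesgue)"

definition eps_term :: "real \<Rightarrow> real \<Rightarrow> real \<Rightarrow> int set \<Rightarrow> (real \<Rightarrow> complex) \<Rightarrow> real \<Rightarrow> ennreal" where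
  "eps_term p q \<theta> K g \<epsilon> =
     (let S = (\<integral>\<^sup>+ k. ennreal (enn2real (loc_int p g k) powr (q * (1 + \<epsilon>) / p)) \<partial>count_space K)
      in if S = \<infinity> then \<infinity>
         else ennreal ((\<epsilon> powr \<theta> * enn2real S) powr (1 / (q * (1 + \<epsilon>)))))"

definition gam_norm_ext :: "real \<Rightarrow> real \<Rightarrow> real \<Rightarrow> int set \<Rightarrow> (real \<Rightarrow> complex) \<Rightarrow> ennreal" where
  "gam_norm_ext p q \<theta> K g = (SUP \<epsilon>\<in>{0<..}. eps_term p q \<theta> K g \<epsilon>)"

definition gam_space :: "real \<Rightarrow> real \<Rightarrow> real \<Rightarrow> int set \<Rightarrow> (real \<Rightarrow> complex) set" where
  "gam_space p q \<theta> K =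
     {g. set_borel_measurable lebesgue (dom_am K) g
         \<and> (\<forall>k\<in>K. loc_int p g k < \<infinity>)
         \<and> gam_norm_ext p q \<theta> K g < \<infinity>}"

definition gam_norm :: "real \<Rightarrow> real \<Rightarrow> real \<Rightarrow> int set \<Rightarrow> (real \<Rightarrow> complex) \<Rightarrow> real" where
  "gam_norm p q \<theta> K g = enn2real (gam_norm_ext p q \<theta> K g)"

text \<open>Equality almost everywhere on the domain (functions equal a.e. are identified).\<close>
definition ae_eq_on :: "int set \<Rightarrow> (real \<Rightarrow> complex) \<Rightarrow> (real \<Rightarrow> complex) \<Rightarrow> bool" where
  "ae_eq_on K f g \<longleftrightarrow> (AE x in lebesgue. x \<in> dom_am K \<longrightarrow> f x = g x)"

end

theory Submission
  imports Defs
begin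

lemma conv_pt:
  fixes a b u v p :: real
  assumes p: "1 \<le> p" and a: "0 < a" and b: "0 < b" and u: "0 \<le> u" and v: "0 \<le> v"
  shows "(u + v) powr p \<le> (a + b) powr (p - 1) * (u powr p / a powr (p - 1) + v powr p / b powr (p - 1))"
proof -
  have ab: "a powr (p-1) \<le> (a+b) powr (p-1)" "b powr (p-1) \<le> (a+b) powr (p-1)"
    using a b p by (auto intro!: powr_mono2)
  have apos: "a powr (p-1) > 0" "b powr (p-1) > 0" using a b by auto
  show ?thesis
  proof (cases "u = 0 \<or> v = 0")
    case True
    then show ?thesis
    proof
      assume "u = 0"
      have "v powr p * b powr (p-1) \<le> v powr p * (a + b) powr (p - 1)"
        using ab(2) by (intro mult_left_mono) auto
      then have "v powr p \<le> (a + b) powr (p - 1) * (v powr p / b powr (p - 1))"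
        using apos by (simp add: field_simps)
      then show ?thesis using \<open>u = 0\<close> p by simp
    next
      assume "v = 0"
      have "u powr p * a powr (p-1) \<le> u powr p * (a + b) powr (p - 1)"
        using ab(1) by (intro mult_left_mono) auto
      then have "u powr p \<le> (a + b) powr (p - 1) * (u powr p / a powr (p - 1))"
        using apos by (simp add: field_simps)
      then show ?thesis using \<open>v = 0\<close> p by simp
    qed
  next
    case False
    then have u': "u > 0" and v': "v > 0" using u v by auto
    define t where "t = b / (a + b)"
    have t: "0 \<le> t" "t \<le> 1" using a b by (auto simp: t_def)
    have "((1 - t) *\<^sub>R (u/a) + t *\<^sub>R (v/b)) powr p \<le> (1 - t) * (u/a) powr p + t * (v/b) powr p"
    proof -
      have "u/a \<in> {0<..}" "v/b \<in> {0<..}" using u' v' a b by auto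
      from convex_onD[OF powr_convex[OF p] t this] show ?thesis .
    qed
    moreover have "(1 - t) *\<^sub>R (u/a) + t *\<^sub>R (v/b) = (u + v) / (a + b)"
    proof -
      have "1 - t = a/(a+b)" using a b by (simp add: t_def field_simps)
      then have "(1 - t) *\<^sub>R (u/a) + t *\<^sub>R (v/b) = u/(a+b) + v/(a+b)"
        using a b by (simp add: t_def)
      then show ?thesis by (simp add: add_divide_distrib)
    qed
    ultimately have c0: "((u + v) / (a + b)) powr p \<le> (1 - t) * (u/a) powr p + t * (v/b) powr p"
      by simp
    have "1 - t = a/(a+b)" using a b by (simp add: t_def field_simps)
    moreover have "(u/a) powr p = u powr p / a powr p" "(v/b) powr p = v powr p / b powr p"
      using u v a b by (auto simp: powr_divide)
    ultimately have c: "((u + v) / (a + b)) powr p \<le> (a/(a+b)) * (u powr p / a powr p) + (b/(a+b)) * (v powr p / b powr p)"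
      using c0 unfolding t_def by simp
    have e1: "a powr p = a * a powr (p-1)" using a by (simp add: powr_mult_base)
    have e2: "b powr p = b * b powr (p-1)" using b by (simp add: powr_mult_base)
    have e3: "(a+b) powr p = (a+b) * (a+b) powr (p-1)" using a b by (simp add: powr_mult_base)
    have "(u + v) powr p = (a+b) powr p * ((u + v) / (a + b)) powr p"
      using a b u v by (simp add: powr_divide)
    also have "\<dots> \<le> (a+b) powr p * ((a/(a+b)) * (u powr p / a powr p) + (b/(a+b)) * (v powr p / b powr p))"
      using c by (intro mult_left_mono) auto
    also have "\<dots> = (a + b) powr (p - 1) * (u powr p / a powr (p - 1) + v powr p / b powr (p - 1))"
    proof -
      have gen: "(a+b)*C*((a/(a+b))*(U/(a*A)) + (b/(a+b))*(V/(b*B))) = C*(U/A+V/B)"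
        if "A > 0" "B > 0" for A B C U V :: real
      proof -
        have "a + b > 0" using a b by simp
        then have "(a/(a+b))*(U/(a*A)) = (U/A)/(a+b)" "(b/(a+b))*(V/(b*B)) = (V/B)/(a+b)" using that a b by (auto simp: field_simps)
        then have "(a/(a+b))*(U/(a*A)) + (b/(a+b))*(V/(b*B)) = (U/A + V/B)/(a+b)" by (simp add: add_divide_distrib)
        then show ?thesis using \<open>a+b>0\<close> by simp
      qed
      show ?thesis unfolding e1 e2 e3 using gen[OF apos] by simp
    qed
    finally show ?thesis .
  qed
qed

lemma minkowski_nn:
  fixes u v :: "'a \<Rightarrow> real" and A B p :: real
  assumes p: "1 \<le> p" and um: "u \<in> borel_measurable M" and vm: "v \<in> borel_measurable M"
    and u0: "\<And>x. 0 \<le> u x" and v0: "\<And>x. 0 \<le> v x"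
    and A: "(\<integral>\<^sup>+x. ennreal (u x powr p) \<partial>M) = ennreal A" and A0: "0 \<le> A"
    and B: "(\<integral>\<^sup>+x. ennreal (v x powr p) \<partial>M) = ennreal B" and B0: "0 \<le> B"
  shows "(\<integral>\<^sup>+x. ennreal ((u x + v x) powr p) \<partial>M) \<le> ennreal ((A powr (1/p) + B powr (1/p)) powr p)"
proof -
  have umeas: "(\<lambda>x. ennreal (u x powr p)) \<in> borel_measurable M" using um by measurable
  have vmeas: "(\<lambda>x. ennreal (v x powr p)) \<in> borel_measurable M" using vm by measurable
  have pp: "p > 0" using p by simp
  have AA: "(A powr (1/p)) powr p = A" using A0 pp by (simp add: powr_powr)
  have BB: "(B powr (1/p)) powr p = B" using B0 pp by (simp add: powr_powr)
  show ?thesis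
  proof (cases "A = 0 \<or> B = 0")
    case True
    then show ?thesis
    proof
      assume "A = 0"
      then have "AE x in M. ennreal (u x powr p) = 0" using A nn_integral_0_iff_AE[OF umeas] by simp
      then have "AE x in M. u x = 0" by eventually_elim (use u0 in auto)
      then have "(\<integral>\<^sup>+x. ennreal ((u x + v x) powr p) \<partial>M) = (\<integral>\<^sup>+x. ennreal (v x powr p) \<partial>M)"
        by (intro nn_integral_cong_AE) (auto elim!: eventually_mono)
      then show ?thesis using B BB \<open>A = 0\<close> pp by simp
    next
      assume "B = 0"
      then have "AE x in M. ennreal (v x powr p) = 0" using B nn_integral_0_iff_AE[OF vmeas] by simp
      then have "AE x in M. v x = 0" by eventually_elim (use v0 in auto)
      then have "(\<integral>\<^sup>+x. ennreal ((u x + v x) powr p) \<partial>M) = (\<integral>\<^sup>+x. ennreal (u x powr p) \<partial>M)"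
        by (intro nn_integral_cong_AE) (auto elim!: eventually_mono)
      then show ?thesis using A AA \<open>B = 0\<close> pp by simp
    qed
  next
    case False
    define a where "a = A powr (1/p)"
    define b where "b = B powr (1/p)"
    have a: "a > 0" and b: "b > 0" using False A0 B0 by (auto simp: a_def b_def)
    have Aa: "A = a * a powr (p-1)" using AA a by (simp add: a_def[symmetric] powr_mult_base)
    have Bb: "B = b * b powr (p-1)" using BB b by (simp add: b_def[symmetric] powr_mult_base)
    define C where "C = (a + b) powr (p - 1)"
    have C0: "C \<ge> 0" by (simp add: C_def)
    have ap: "a powr (p-1) > 0" "b powr (p-1) > 0" using a b by auto
    have "(\<integral>\<^sup>+x. ennreal ((u x + v x) powr p) \<partial>M) \<le>
          (\<integral>\<^sup>+x. ennreal C * (ennreal (1 / a powr (p-1)) * ennreal (u x powr p) + ennreal (1 / b powr (p-1)) * ennreal (v x powr p)) \<partial>M)"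
    proof (intro nn_integral_mono)
      fix x
      have "(u x + v x) powr p \<le> C * (u x powr p / a powr (p - 1) + v x powr p / b powr (p - 1))"
        unfolding C_def by (rule conv_pt[OF p a b u0 v0])
      also have "\<dots> = C * ((1 / a powr (p-1)) * (u x powr p) + (1 / b powr (p-1)) * (v x powr p))" by simp
      finally show "ennreal ((u x + v x) powr p) \<le> ennreal C * (ennreal (1 / a powr (p-1)) * ennreal (u x powr p) + ennreal (1 / b powr (p-1)) * ennreal (v x powr p))"
        using C0 ap by (simp add: ennreal_mult[symmetric] ennreal_plus[symmetric] ennreal_leI del: ennreal_plus)
    qed
    also have "\<dots> = ennreal C * (ennreal (1 / a powr (p-1)) * ennreal A + ennreal (1 / b powr (p-1)) * ennreal B)"
      using umeas vmeas A B by (simp add: nn_integral_cmult nn_integral_add)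
    also have "\<dots> = ennreal (C * (a + b))"
      using C0 ap A0 B0 a b by (simp add: ennreal_mult[symmetric] ennreal_plus[symmetric] Aa Bb del: ennreal_plus)
    also have "C * (a + b) = (A powr (1/p) + B powr (1/p)) powr p"
      unfolding C_def a_def[symmetric] b_def[symmetric] using a b by (simp add: powr_mult_base mult.commute)
    finally show ?thesis .
  qed
qed


lemma Ik_dom: "k \<in> K \<Longrightarrow> x \<in> Ik k \<Longrightarrow> x \<in> dom_am K"
  by (auto simp: dom_am_def)

lemma Ik_sets[measurable]: "Ik k \<in> sets lebesgue" unfolding Ik_def by simp

definition uf :: "int set \<Rightarrow> (real \<Rightarrow> complex) \<Rightarrow> int \<Rightarrow> real \<Rightarrow> real" where
  "uf K f k x = indicator (Ik k) x * cmod (indicator (dom_am K) x *\<^sub>R f x)"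

lemma uf_meas:
  assumes "set_borel_measurable lebesgue (dom_am K) f"
  shows "uf K f k \<in> borel_measurable lebesgue"
  using assms unfolding uf_def set_borel_measurable_def by measurable

lemma uf_nonneg: "0 \<le> uf K f k x" by (simp add: uf_def)

lemma uf_eq: "k \<in> K \<Longrightarrow> uf K f k x = indicator (Ik k) x * cmod (f x)"
  by (auto simp: uf_def indicator_def Ik_dom)

lemma loc_int_uf:
  assumes "p > 0" "k \<in> K"
  shows "loc_int p f k = (\<integral>\<^sup>+x. ennreal (uf K f k x powr p) \<partial>lebesgue)"
  unfolding loc_int_def using assms
  by (intro nn_integral_cong) (auto simp: uf_eq indicator_def)

lemma loc_int_minkowski:
  assumes p: "1 \<le> p" and k: "k \<in> K"
    and fm: "set_borel_measurable lebesgue (dom_am K) f" and gm: "set_borel_measurable lebesgue (dom_am K) g"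
    and ff: "loc_int p f k < \<infinity>" and gf: "loc_int p g k < \<infinity>"
  shows "loc_int p (\<lambda>x. f x + g x) k \<le>
     ennreal ((enn2real (loc_int p f k) powr (1/p) + enn2real (loc_int p g k) powr (1/p)) powr p)"
proof -
  have pp: "p > 0" using p by simp
  have "loc_int p (\<lambda>x. f x + g x) k = (\<integral>\<^sup>+x. ennreal (uf K (\<lambda>x. f x + g x) k x powr p) \<partial>lebesgue)"
    by (rule loc_int_uf[OF pp k])
  also have "\<dots> \<le> (\<integral>\<^sup>+x. ennreal ((uf K f k x + uf K g k x) powr p) \<partial>lebesgue)"
  proof (intro nn_integral_mono ennreal_leI powr_mono2)
    fix x
    show "uf K (\<lambda>x. f x + g x) k x \<le> uf K f k x + uf K g k x"
      using k by (auto simp: uf_eq indicator_def norm_triangle_ineq)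
  qed (use pp in \<open>auto simp: uf_nonneg\<close>)
  also have "\<dots> \<le> ennreal ((enn2real (loc_int p f k) powr (1/p) + enn2real (loc_int p g k) powr (1/p)) powr p)"
  proof (rule minkowski_nn[OF p uf_meas[OF fm] uf_meas[OF gm] uf_nonneg uf_nonneg])
    show "(\<integral>\<^sup>+x. ennreal (uf K f k x powr p) \<partial>lebesgue) = ennreal (enn2real (loc_int p f k))"
      using ff loc_int_uf[OF pp k, of f] by simp
    show "(\<integral>\<^sup>+x. ennreal (uf K g k x powr p) \<partial>lebesgue) = ennreal (enn2real (loc_int p g k))"
      using gf loc_int_uf[OF pp k, of g] by simp
  qed auto
  finally show ?thesis .
qed

definition Ssum :: "real \<Rightarrow> real \<Rightarrow> int set \<Rightarrow> (real \<Rightarrow> complex) \<Rightarrow> real \<Rightarrow> ennreal" where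
  "Ssum p q K g \<epsilon> = (\<integral>\<^sup>+ k. ennreal (enn2real (loc_int p g k) powr (q * (1 + \<epsilon>) / p)) \<partial>count_space K)"

lemma eps_term_Ssum: "eps_term p q \<theta> K g \<epsilon> =
  (if Ssum p q K g \<epsilon> = \<infinity> then \<infinity> else ennreal ((\<epsilon> powr \<theta> * enn2real (Ssum p q K g \<epsilon>)) powr (1 / (q * (1 + \<epsilon>)))))"
  unfolding eps_term_def Ssum_def Let_def by simp

lemma eps_tri:
  assumes p: "1 \<le> p" and q: "1 \<le> q" and e: "\<epsilon> > 0"
    and fm: "set_borel_measurable lebesgue (dom_am K) f" and gm: "set_borel_measurable lebesgue (dom_am K) g"
    and ff: "\<forall>k\<in>K. loc_int p f k < \<infinity>" and gf: "\<forall>k\<in>K. loc_int p g k < \<infinity>"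
  shows "eps_term p q \<theta> K (\<lambda>x. f x + g x) \<epsilon> \<le> eps_term p q \<theta> K f \<epsilon> + eps_term p q \<theta> K g \<epsilon>"
proof (cases "Ssum p q K f \<epsilon> = \<infinity> \<or> Ssum p q K g \<epsilon> = \<infinity>")
  case True
  then show ?thesis by (auto simp: eps_term_Ssum)
next
  case False
  define r where "r = q * (1 + \<epsilon>)"
  have r: "1 \<le> r" using q e unfolding r_def
    by (metis add_increasing2 less_eq_real_def mult_1_right mult_mono' zero_le_one)
  have pp: "p > 0" using p by simp
  define bf where "bf k = enn2real (loc_int p f k) powr (1/p)" for k
  define bg where "bg k = enn2real (loc_int p g k) powr (1/p)" for k
  define bh where "bh k = enn2real (loc_int p (\<lambda>x. f x + g x) k) powr (1/p)" for k
  have bf0: "\<And>k. 0 \<le> bf k" and bg0: "\<And>k. 0 \<le> bg k" by (auto simp: bf_def bg_def)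
  have rp: "r / p = 1/p * r" by simp
  have Sf: "Ssum p q K f \<epsilon> = (\<integral>\<^sup>+ k. ennreal (bf k powr r) \<partial>count_space K)"
    unfolding Ssum_def bf_def r_def[symmetric] rp powr_powr ..
  have Sg: "Ssum p q K g \<epsilon> = (\<integral>\<^sup>+ k. ennreal (bg k powr r) \<partial>count_space K)"
    unfolding Ssum_def bg_def r_def[symmetric] rp powr_powr ..
  have Sh: "Ssum p q K (\<lambda>x. f x + g x) \<epsilon> = (\<integral>\<^sup>+ k. ennreal (bh k powr r) \<partial>count_space K)"
    unfolding Ssum_def bh_def r_def[symmetric] rp powr_powr ..
  define A where "A = enn2real (Ssum p q K f \<epsilon>)"
  define B where "B = enn2real (Ssum p q K g \<epsilon>)"
  have A0: "A \<ge> 0" and B0: "B \<ge> 0" by (auto simp: A_def B_def)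
  have SA: "Ssum p q K f \<epsilon> = ennreal A" and SB: "Ssum p q K g \<epsilon> = ennreal B"
    using False by (auto simp: A_def B_def ennreal_enn2real_if)
  have bh_le: "bh k \<le> bf k + bg k" if "k \<in> K" for k
  proof -
    have "loc_int p (\<lambda>x. f x + g x) k \<le> ennreal ((bf k + bg k) powr p)"
      using loc_int_minkowski[OF p that fm gm] ff gf that unfolding bf_def bg_def by simp
    then have "enn2real (loc_int p (\<lambda>x. f x + g x) k) \<le> enn2real (ennreal ((bf k + bg k) powr p))"
      by (intro enn2real_mono) auto
    then have "enn2real (loc_int p (\<lambda>x. f x + g x) k) \<le> (bf k + bg k) powr p" by simp
    then have "enn2real (loc_int p (\<lambda>x. f x + g x) k) powr (1/p) \<le> ((bf k + bg k) powr p) powr (1/p)"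
      using pp by (intro powr_mono2) auto
    also have "\<dots> = bf k + bg k" using pp by (simp add: powr_powr bf_def bg_def)
    finally show ?thesis unfolding bh_def .
  qed
  have "Ssum p q K (\<lambda>x. f x + g x) \<epsilon> \<le> (\<integral>\<^sup>+ k. ennreal ((bf k + bg k) powr r) \<partial>count_space K)"
    unfolding Sh using r bh_le by (intro nn_integral_mono ennreal_leI powr_mono2) (auto simp: bh_def)
  also have "\<dots> \<le> ennreal ((A powr (1/r) + B powr (1/r)) powr r)"
    by (rule minkowski_nn[OF r borel_measurable_count_space borel_measurable_count_space])
       (auto simp: bf0 bg0 Sf[symmetric] Sg[symmetric] SA SB A0 B0)
  finally have Sh_le: "Ssum p q K (\<lambda>x. f x + g x) \<epsilon> \<le> ennreal ((A powr (1/r) + B powr (1/r)) powr r)" .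
  then have Shfin: "Ssum p q K (\<lambda>x. f x + g x) \<epsilon> \<noteq> \<infinity>" by (auto simp: top_unique)
  have "enn2real (Ssum p q K (\<lambda>x. f x + g x) \<epsilon>) \<le> (A powr (1/r) + B powr (1/r)) powr r"
    using Sh_le Shfin by (simp add: enn2real_leI)
  define D where "D = (A powr (1/r) + B powr (1/r)) powr r"
  have D0: "D \<ge> 0" by (simp add: D_def)
  have Ef: "eps_term p q \<theta> K f \<epsilon> = ennreal ((\<epsilon> powr \<theta> * A) powr (1/r))"
    using False unfolding eps_term_Ssum r_def A_def by simp
  have Eg: "eps_term p q \<theta> K g \<epsilon> = ennreal ((\<epsilon> powr \<theta> * B) powr (1/r))"
    using False unfolding eps_term_Ssum r_def B_def by simp
  have "eps_term p q \<theta> K (\<lambda>x. f x + g x) \<epsilon> = ennreal ((\<epsilon> powr \<theta> * enn2real (Ssum p q K (\<lambda>x. f x + g x) \<epsilon>)) powr (1/r))"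
    using Shfin unfolding eps_term_Ssum r_def by simp
  also have "\<dots> \<le> ennreal ((\<epsilon> powr \<theta> * D) powr (1/r))"
    using \<open>enn2real (Ssum p q K (\<lambda>x. f x + g x) \<epsilon>) \<le> (A powr (1/r) + B powr (1/r)) powr r\<close> r
    unfolding D_def by (intro ennreal_leI powr_mono2 mult_left_mono) auto
  also have "(\<epsilon> powr \<theta> * D) powr (1/r) = (\<epsilon> powr \<theta>) powr (1/r) * (A powr (1/r) + B powr (1/r))"
    using r D0 unfolding D_def by (simp add: powr_mult powr_powr)
  also have "\<dots> = (\<epsilon> powr \<theta> * A) powr (1/r) + (\<epsilon> powr \<theta> * B) powr (1/r)"
    using A0 B0 by (simp add: powr_mult distrib_left)
  also have "ennreal \<dots> = eps_term p q \<theta> K f \<epsilon> + eps_term p q \<theta> K g \<epsilon>"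
    unfolding Ef Eg by (simp add: ennreal_plus)
  finally show ?thesis .
qed

lemma gam_tri:
  assumes p: "1 \<le> p" and q: "1 \<le> q"
    and fm: "set_borel_measurable lebesgue (dom_am K) f" and gm: "set_borel_measurable lebesgue (dom_am K) g"
    and ff: "\<forall>k\<in>K. loc_int p f k < \<infinity>" and gf: "\<forall>k\<in>K. loc_int p g k < \<infinity>"
  shows "gam_norm_ext p q \<theta> K (\<lambda>x. f x + g x) \<le> gam_norm_ext p q \<theta> K f + gam_norm_ext p q \<theta> K g"
  unfolding gam_norm_ext_def
proof (intro SUP_least)
  fix e :: real assume "e \<in> {0<..}"
  then have "eps_term p q \<theta> K (\<lambda>x. f x + g x) e \<le> eps_term p q \<theta> K f e + eps_term p q \<theta> K g e"
    using eps_tri[OF p q _ fm gm ff gf] by simp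
  also have "\<dots> \<le> (SUP e\<in>{0<..}. eps_term p q \<theta> K f e) + (SUP e\<in>{0<..}. eps_term p q \<theta> K g e)"
    using \<open>e \<in> {0<..}\<close> by (intro add_mono SUP_upper)
  finally show "eps_term p q \<theta> K (\<lambda>x. f x + g x) e \<le> (SUP e\<in>{0<..}. eps_term p q \<theta> K f e) + (SUP e\<in>{0<..}. eps_term p q \<theta> K g e)" .
qed

lemma loc_int_scal:
  assumes p: "1 \<le> p" and fm: "set_borel_measurable lebesgue (dom_am K) f" and k: "k \<in> K"
  shows "loc_int p (\<lambda>x. c * f x) k = ennreal (cmod c powr p) * loc_int p f k"
proof -
  have pp: "p > 0" using p by simp
  have "loc_int p (\<lambda>x. c * f x) k = (\<integral>\<^sup>+x. ennreal (cmod c powr p) * ennreal (uf K f k x powr p) \<partial>lebesgue)"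
    unfolding loc_int_uf[OF pp k]
    by (intro nn_integral_cong) (auto simp: uf_eq[OF k] norm_mult powr_mult ennreal_mult[symmetric] indicator_def pp)
  also have "\<dots> = ennreal (cmod c powr p) * loc_int p f k"
    unfolding loc_int_uf[OF pp k] using uf_meas[OF fm]
    by (intro nn_integral_cmult) measurable
  finally show ?thesis .
qed

lemma eps_scal:
  assumes p: "1 \<le> p" and q: "1 \<le> q" and e: "\<epsilon> > 0" and fm: "set_borel_measurable lebesgue (dom_am K) f"
  shows "eps_term p q \<theta> K (\<lambda>x. c * f x) \<epsilon> = ennreal (cmod c) * eps_term p q \<theta> K f \<epsilon>"
proof -
  define r where "r = q * (1 + \<epsilon>)"
  have r: "r > 0" using q e by (simp add: r_def)
  have pp: "p > 0" using p by simp
  have S: "Ssum p q K (\<lambda>x. c * f x) \<epsilon> = ennreal (cmod c powr r) * Ssum p q K f \<epsilon>"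
  proof -
    have "Ssum p q K (\<lambda>x. c * f x) \<epsilon> = (\<integral>\<^sup>+ k. ennreal (cmod c powr r) * ennreal (enn2real (loc_int p f k) powr (r / p)) \<partial>count_space K)"
      unfolding Ssum_def r_def[symmetric]
    proof (intro nn_integral_cong)
      fix k assume "k \<in> space (count_space K)"
      then have k: "k \<in> K" by simp
      have "enn2real (loc_int p (\<lambda>x. c * f x) k) powr (r / p) = (cmod c powr p * enn2real (loc_int p f k)) powr (r/p)"
        unfolding loc_int_scal[OF p fm k] by (simp add: enn2real_mult)
      also have "\<dots> = cmod c powr r * enn2real (loc_int p f k) powr (r / p)"
        using pp by (simp add: powr_mult powr_powr)
      finally show "ennreal (enn2real (loc_int p (\<lambda>x. c * f x) k) powr (r / p)) = ennreal (cmod c powr r) * ennreal (enn2real (loc_int p f k) powr (r / p))"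
        by (simp add: ennreal_mult)
    qed
    also have "\<dots> = ennreal (cmod c powr r) * Ssum p q K f \<epsilon>"
      unfolding Ssum_def r_def[symmetric] by (rule nn_integral_cmult) simp
    finally show ?thesis .
  qed
  show ?thesis
  proof (cases "c = 0")
    case True
    then show ?thesis using S by (simp add: eps_term_Ssum)
  next
    case False
    then have cp: "cmod c powr r > 0" by simp
    show ?thesis
    proof (cases "Ssum p q K f \<epsilon> = \<infinity>")
      case True
      then show ?thesis using S cp False by (simp add: eps_term_Ssum ennreal_mult_top)
    next
      case False
      have fin: "Ssum p q K (\<lambda>x. c * f x) \<epsilon> \<noteq> \<infinity>" using S False by (simp add: ennreal_mult_eq_top_iff)
      have "(\<epsilon> powr \<theta> * enn2real (Ssum p q K (\<lambda>x. c * f x) \<epsilon>)) powr (1/r)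
          = (cmod c powr r) powr (1/r) * (\<epsilon> powr \<theta> * enn2real (Ssum p q K f \<epsilon>)) powr (1/r)"
        unfolding S by (simp add: enn2real_mult powr_mult[symmetric] mult.left_commute)
      also have "(cmod c powr r) powr (1/r) = cmod c" using r by (simp add: powr_powr)
      finally show ?thesis using fin False
        by (simp add: eps_term_Ssum r_def[symmetric] ennreal_mult)
    qed
  qed
qed

lemma gam_scal:
  assumes p: "1 \<le> p" and q: "1 \<le> q" and fm: "set_borel_measurable lebesgue (dom_am K) f"
  shows "gam_norm_ext p q \<theta> K (\<lambda>x. c * f x) = ennreal (cmod c) * gam_norm_ext p q \<theta> K f"
  unfolding gam_norm_ext_def SUP_mult_left_ennreal
  by (intro SUP_cong refl eps_scal[OF p q _ fm]) simp

lemma gam_cong: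
  assumes "\<forall>k\<in>K. loc_int p f k = loc_int p g k"
  shows "eps_term p q \<theta> K f e = eps_term p q \<theta> K g e" "gam_norm_ext p q \<theta> K f = gam_norm_ext p q \<theta> K g"
proof -
  have "Ssum p q K f e' = Ssum p q K g e'" for e'
    unfolding Ssum_def using assms by (intro nn_integral_cong) simp
  then show "eps_term p q \<theta> K f e = eps_term p q \<theta> K g e" for e
    unfolding eps_term_Ssum by simp
  then show "gam_norm_ext p q \<theta> K f = gam_norm_ext p q \<theta> K g"
    unfolding gam_norm_ext_def by simp
qed

lemma loc_int_ae:
  assumes "ae_eq_on K f g" "k \<in> K"
  shows "loc_int p f k = loc_int p g k"
  unfolding loc_int_def
proof (intro nn_integral_cong_AE)
  show "AE x in lebesgue. ennreal (cmod (f x) powr p) * indicator (Ik k) x = ennreal (cmod (g x) powr p) * indicator (Ik k) x"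
    using assms(1) unfolding ae_eq_on_def
    by eventually_elim (auto simp: indicator_def Ik_dom[OF assms(2)])
qed

lemma loc_int_zero: "p > 0 \<Longrightarrow> loc_int p (\<lambda>x. 0) k = 0"
  by (simp add: loc_int_def)

lemma gam_zero: "p > 0 \<Longrightarrow> gam_norm_ext p q \<theta> K (\<lambda>x. 0) = 0"
  unfolding gam_norm_ext_def eps_term_Ssum Ssum_def loc_int_zero
  by simp

lemma single_bound:
  assumes p: "1 \<le> p" and q: "1 \<le> q" and fin: "gam_norm_ext p q \<theta> K f < \<infinity>" and k: "k \<in> K"
  shows "enn2real (loc_int p f k) \<le> (gam_norm p q \<theta> K f) powr p"
proof -
  define r where "r = q * (1 + 1)"
  have r: "r > 0" using q by (simp add: r_def)
  have pp: "p > 0" using p by simp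
  define a where "a = enn2real (loc_int p f k)"
  have a0: "a \<ge> 0" by (simp add: a_def)
  have le1: "eps_term p q \<theta> K f 1 \<le> gam_norm_ext p q \<theta> K f"
    unfolding gam_norm_ext_def by (intro SUP_upper) simp
  then have Sfin: "Ssum p q K f 1 \<noteq> \<infinity>" using fin by (auto simp: eps_term_Ssum)
  have E: "eps_term p q \<theta> K f 1 = ennreal ((enn2real (Ssum p q K f 1)) powr (1/r))"
    using Sfin by (simp add: eps_term_Ssum r_def)
  have "ennreal (a powr (r/p)) \<le> Ssum p q K f 1"
    unfolding Ssum_def a_def r_def using k by (intro nn_integral_ge_point) simp
  then have "enn2real (ennreal (a powr (r/p))) \<le> enn2real (Ssum p q K f 1)"
    using Sfin by (intro enn2real_mono) (auto simp: less_top)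
  then have "a powr (r/p) \<le> enn2real (Ssum p q K f 1)" by simp
  then have "(a powr (r/p)) powr (1/r) \<le> (enn2real (Ssum p q K f 1)) powr (1/r)"
    using r by (intro powr_mono2) auto
  also have "(a powr (r/p)) powr (1/r) = a powr (1/p)" using r by (simp add: powr_powr)
  also have "(enn2real (Ssum p q K f 1)) powr (1/r) = enn2real (eps_term p q \<theta> K f 1)"
    unfolding E by simp
  also have "\<dots> \<le> gam_norm p q \<theta> K f"
    unfolding gam_norm_def using le1 fin by (intro enn2real_mono) auto
  finally have "(a powr (1/p)) powr p \<le> (gam_norm p q \<theta> K f) powr p"
    using pp by (intro powr_mono2) auto
  also have "(a powr (1/p)) powr p = a" using pp a0 by (simp add: powr_powr)
  finally show ?thesis unfolding a_def .
qed

lemma zero_norm_ae: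
  assumes p: "1 \<le> p" and q: "1 \<le> q" and fm: "set_borel_measurable lebesgue (dom_am K) f"
    and ff: "\<forall>k\<in>K. loc_int p f k < \<infinity>" and fin: "gam_norm_ext p q \<theta> K f < \<infinity>"
    and z: "gam_norm p q \<theta> K f = 0"
  shows "ae_eq_on K f (\<lambda>x. 0)"
proof -
  have pp: "p > 0" using p by simp
  have "AE x in lebesgue. x \<in> Ik k \<longrightarrow> f x = 0" if k: "k \<in> K" for k
  proof -
    have "enn2real (loc_int p f k) \<le> 0" using single_bound[OF p q fin k] z pp by simp
    then have "enn2real (loc_int p f k) = 0" by (intro antisym) auto
    then have "loc_int p f k = 0" using ff k by (auto simp: enn2real_eq_0_iff)
    then have "AE x in lebesgue. ennreal (uf K f k x powr p) = 0"
      unfolding loc_int_uf[OF pp k] using uf_meas[OF fm]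
      by (subst (asm) nn_integral_0_iff_AE) (measurable, simp)
    then show ?thesis
      by eventually_elim (auto simp: uf_eq[OF k])
  qed
  then have "AE x in lebesgue. \<forall>k\<in>K. x \<in> Ik k \<longrightarrow> f x = 0"
    by (subst AE_ball_countable) auto
  then show ?thesis unfolding ae_eq_on_def
    by eventually_elim (auto simp: dom_am_def)
qed

lemma liminf_powr:
  fixes x :: "nat \<Rightarrow> real"
  assumes t: "t > 0" and x0: "\<And>j. x j \<ge> 0" and D0: "D \<ge> 0"
    and le: "ennreal D \<le> liminf (\<lambda>j. ennreal (x j))"
  shows "ennreal (D powr t) \<le> liminf (\<lambda>j. ennreal (x j powr t))"
  unfolding le_Liminf_iff
proof (intro allI impI)
  fix y :: ennreal assume y: "y < ennreal (D powr t)"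
  then have yfin: "y \<noteq> \<infinity>" by auto
  define y0 where "y0 = enn2real y"
  have y0: "y0 \<ge> 0" "y = ennreal y0" using yfin by (auto simp: y0_def ennreal_enn2real_if)
  have "y0 < D powr t" using y y0 by (simp add: ennreal_less_iff)
  then have "y0 powr (1/t) < (D powr t) powr (1/t)" using t y0 by (intro powr_less_mono2) auto
  also have "\<dots> = D" using t D0 by (simp add: powr_powr)
  finally have "y0 powr (1/t) < D" .
  then have "ennreal (y0 powr (1/t)) < ennreal D"
    by (subst ennreal_less_iff) auto
  then have lt: "ennreal (y0 powr (1/t)) < liminf (\<lambda>j. ennreal (x j))"
    using le by (rule order_less_le_trans)
  have "\<forall>y<liminf (\<lambda>j. ennreal (x j)). eventually (\<lambda>j. y < ennreal (x j)) sequentially"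
    using le_Liminf_iff[of "liminf (\<lambda>j. ennreal (x j))" sequentially "\<lambda>j. ennreal (x j)"] by simp
  then have "eventually (\<lambda>j. ennreal (y0 powr (1/t)) < ennreal (x j)) sequentially"
    using lt by blast
  then show "eventually (\<lambda>j. y < ennreal (x j powr t)) sequentially"
  proof eventually_elim
    case (elim j)
    then have "y0 powr (1/t) < x j" by (simp add: ennreal_less_iff)
    then have "(y0 powr (1/t)) powr t < x j powr t" using t by (intro powr_less_mono2) auto
    then have "y0 < x j powr t" using t y0 by (simp add: powr_powr)
    then show ?case using y0 by (simp add: ennreal_less_iff)
  qed
qed

lemma liminf_le_bound:
  fixes f :: "nat \<Rightarrow> ennreal"
  assumes "eventually (\<lambda>j. f j \<le> c) sequentially"
  shows "liminf f \<le> c"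
  using Liminf_le_Limsup[of sequentially f] Limsup_bounded[OF assms] by simp

lemma fatou_loc:
  assumes p: "1 \<le> p" and k: "k \<in> K"
    and Hm: "\<And>j. set_borel_measurable lebesgue (dom_am K) (H j)"
    and conv: "AE x in lebesgue. x \<in> dom_am K \<longrightarrow> (\<lambda>j. H j x) \<longlonglongrightarrow> h x"
  shows "loc_int p h k \<le> liminf (\<lambda>j. loc_int p (H j) k)"
proof -
  have pp: "p > 0" using p by simp
  have "loc_int p h k = (\<integral>\<^sup>+x. liminf (\<lambda>j. ennreal (uf K (H j) k x powr p)) \<partial>lebesgue)"
    unfolding loc_int_def
  proof (intro nn_integral_cong_AE)
    show "AE x in lebesgue. ennreal (cmod (h x) powr p) * indicator (Ik k) x = liminf (\<lambda>j. ennreal (uf K (H j) k x powr p))"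
      using conv
    proof eventually_elim
      case (elim x)
      show ?case
      proof (cases "x \<in> Ik k")
        case True
        then have "(\<lambda>j. H j x) \<longlonglongrightarrow> h x" using elim Ik_dom[OF k] by blast
        then have "(\<lambda>j. ennreal (cmod (H j x) powr p)) \<longlonglongrightarrow> ennreal (cmod (h x) powr p)"
          using pp by (intro tendsto_ennrealI tendsto_powr' tendsto_norm tendsto_const) auto
        then have "liminf (\<lambda>j. ennreal (cmod (H j x) powr p)) = ennreal (cmod (h x) powr p)"
          by (intro lim_imp_Liminf) auto
        then show ?thesis using True by (simp add: uf_eq[OF k])
      next
        case False
        then show ?thesis using pp by (simp add: uf_eq[OF k] Liminf_const)
      qed
    qed
  qed
  also have "\<dots> \<le> liminf (\<lambda>j. \<integral>\<^sup>+x. ennreal (uf K (H j) k x powr p) \<partial>lebesgue)"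
    using uf_meas[OF Hm] by (intro nn_integral_liminf) measurable
  also have "\<dots> = liminf (\<lambda>j. loc_int p (H j) k)"
    unfolding loc_int_uf[OF pp k] ..
  finally show ?thesis .
qed

lemma Ssum_bound:
  assumes q: "1 \<le> q" and e: "\<epsilon> > 0" and e0: "e \<ge> 0"
    and le: "eps_term p q \<theta> K f \<epsilon> \<le> ennreal e"
  shows "Ssum p q K f \<epsilon> \<le> ennreal (e powr (q * (1 + \<epsilon>)) / \<epsilon> powr \<theta>)"
proof -
  define r where "r = q * (1 + \<epsilon>)"
  have r: "r > 0" using q e by (simp add: r_def)
  have fin: "Ssum p q K f \<epsilon> \<noteq> \<infinity>" using le by (auto simp: eps_term_Ssum top_unique)
  define s where "s = enn2real (Ssum p q K f \<epsilon>)"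
  have s0: "s \<ge> 0" by (simp add: s_def)
  have "ennreal ((\<epsilon> powr \<theta> * s) powr (1/r)) \<le> ennreal e"
    using le fin by (simp add: eps_term_Ssum s_def r_def)
  then have "(\<epsilon> powr \<theta> * s) powr (1/r) \<le> e" using e0 by (simp add: ennreal_le_iff)
  then have "((\<epsilon> powr \<theta> * s) powr (1/r)) powr r \<le> e powr r" using r by (intro powr_mono2) auto
  also have "((\<epsilon> powr \<theta> * s) powr (1/r)) powr r = \<epsilon> powr \<theta> * s" using r s0 by (simp add: powr_powr)
  finally have "s \<le> e powr r / \<epsilon> powr \<theta>" using e by (simp add: field_simps)
  then have "ennreal s \<le> ennreal (e powr r / \<epsilon> powr \<theta>)" by (rule ennreal_leI)
  then show ?thesis using fin by (simp add: s_def r_def[symmetric] ennreal_enn2real_if)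
qed

lemma eps_le_gam: "\<epsilon> > 0 \<Longrightarrow> eps_term p q \<theta> K f \<epsilon> \<le> gam_norm_ext p q \<theta> K f"
  unfolding gam_norm_ext_def by (intro SUP_upper) simp

lemma fatou_gam:
  assumes p: "1 \<le> p" and q: "1 \<le> q"
    and Hm: "\<And>j. set_borel_measurable lebesgue (dom_am K) (H j)"
    and Hf: "\<And>j. \<forall>k\<in>K. loc_int p (H j) k < \<infinity>"
    and conv: "AE x in lebesgue. x \<in> dom_am K \<longrightarrow> (\<lambda>j. H j x) \<longlonglongrightarrow> h x"
    and bound: "eventually (\<lambda>j. gam_norm_ext p q \<theta> K (H j) \<le> ennreal e) sequentially"
    and e0: "e \<ge> 0"
  shows "\<forall>k\<in>K. loc_int p h k < \<infinity>" and "gam_norm_ext p q \<theta> K h \<le> ennreal e"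
proof -
  have pp: "p > 0" using p by simp
  have evS: "eventually (\<lambda>j. Ssum p q K (H j) \<epsilon> \<le> ennreal (e powr (q * (1 + \<epsilon>)) / \<epsilon> powr \<theta>)) sequentially"
    if e: "\<epsilon> > 0" for \<epsilon>
    using bound
  proof eventually_elim
    case (elim j)
    then have "eps_term p q \<theta> K (H j) \<epsilon> \<le> ennreal e" using eps_le_gam[OF e] order_trans by blast
    then show ?case by (rule Ssum_bound[OF q e e0])
  qed
  have locH: "loc_int p (H j) k = ennreal (enn2real (loc_int p (H j) k))" if "k \<in> K" for j k
    using Hf[of j] that by (auto simp: ennreal_enn2real_if)
  show hfin: "\<forall>k\<in>K. loc_int p h k < \<infinity>"
  proof
    fix k assume k: "k \<in> K"
    define r where "r = q * (1 + 1)"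
    have r: "r > 0" using q by (simp add: r_def)
    define Bd where "Bd = e powr r / 1 powr \<theta>"
    have "eventually (\<lambda>j. loc_int p (H j) k \<le> ennreal (Bd powr (p/r))) sequentially"
      using evS[OF zero_less_one]
    proof eventually_elim
      case (elim j)
      define a where "a = enn2real (loc_int p (H j) k)"
      have a0: "a \<ge> 0" by (simp add: a_def)
      have "ennreal (a powr (r/p)) \<le> Ssum p q K (H j) 1"
        unfolding Ssum_def a_def r_def using k by (intro nn_integral_ge_point) simp
      also have "\<dots> \<le> ennreal Bd" using elim by (simp add: Bd_def r_def)
      finally have "a powr (r/p) \<le> Bd" by (simp add: ennreal_le_iff Bd_def)
      then have "(a powr (r/p)) powr (p/r) \<le> Bd powr (p/r)" using r pp by (intro powr_mono2) auto
      also have "(a powr (r/p)) powr (p/r) = a" using r pp a0 by (simp add: powr_powr)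
      finally have "ennreal a \<le> ennreal (Bd powr (p/r))" by (rule ennreal_leI)
      then show ?case using locH[OF k, of j] by (simp add: a_def)
    qed
    then have "liminf (\<lambda>j. loc_int p (H j) k) \<le> ennreal (Bd powr (p/r))" by (rule liminf_le_bound)
    then have "loc_int p h k \<le> ennreal (Bd powr (p/r))" using fatou_loc[OF p k Hm conv] by (rule order_trans[rotated])
    then show "loc_int p h k < \<infinity>" by (simp add: le_less_trans)
  qed
  have "eps_term p q \<theta> K h \<epsilon> \<le> ennreal e" if e: "\<epsilon> > 0" for \<epsilon>
  proof -
    define r where "r = q * (1 + \<epsilon>)"
    have r: "r > 0" using q e by (simp add: r_def)
    define Bd where "Bd = e powr r / \<epsilon> powr \<theta>"
    have Bd0: "Bd \<ge> 0" by (simp add: Bd_def)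
    have "Ssum p q K h \<epsilon> \<le> (\<integral>\<^sup>+k. liminf (\<lambda>j. ennreal (enn2real (loc_int p (H j) k) powr (r/p))) \<partial>count_space K)"
      unfolding Ssum_def r_def[symmetric]
    proof (intro nn_integral_mono)
      fix k assume "k \<in> space (count_space K)"
      then have k: "k \<in> K" by simp
      show "ennreal (enn2real (loc_int p h k) powr (r / p)) \<le> liminf (\<lambda>j. ennreal (enn2real (loc_int p (H j) k) powr (r / p)))"
      proof (rule liminf_powr)
        have "ennreal (enn2real (loc_int p h k)) = loc_int p h k" using hfin k by (auto simp: ennreal_enn2real_if)
        also have "\<dots> \<le> liminf (\<lambda>j. loc_int p (H j) k)" by (rule fatou_loc[OF p k Hm conv])
        also have "\<dots> = liminf (\<lambda>j. ennreal (enn2real (loc_int p (H j) k)))"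
          using locH[OF k] by simp
        finally show "ennreal (enn2real (loc_int p h k)) \<le> liminf (\<lambda>j. ennreal (enn2real (loc_int p (H j) k)))" .
      qed (use r pp in auto)
    qed
    also have "\<dots> \<le> liminf (\<lambda>j. Ssum p q K (H j) \<epsilon>)"
      unfolding Ssum_def r_def[symmetric] by (intro nn_integral_liminf) simp
    also have "\<dots> \<le> ennreal Bd"
      using evS[OF e] by (intro liminf_le_bound) (simp add: Bd_def r_def)
    finally have Sh: "Ssum p q K h \<epsilon> \<le> ennreal Bd" .
    then have fin: "Ssum p q K h \<epsilon> \<noteq> \<infinity>" by (auto simp: top_unique)
    have "enn2real (Ssum p q K h \<epsilon>) \<le> Bd" using Sh fin Bd0
      by (metis enn2real_ennreal enn2real_mono ennreal_neq_top less_top)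
    then have "(\<epsilon> powr \<theta> * enn2real (Ssum p q K h \<epsilon>)) powr (1/r) \<le> (\<epsilon> powr \<theta> * Bd) powr (1/r)"
      using r by (intro powr_mono2 mult_left_mono) auto
    also have "\<epsilon> powr \<theta> * Bd = e powr r" using e by (simp add: Bd_def)
    also have "(e powr r) powr (1/r) = e" using r e0 by (simp add: powr_powr)
    finally show ?thesis using fin by (simp add: eps_term_Ssum r_def[symmetric] ennreal_leI)
  qed
  then show "gam_norm_ext p q \<theta> K h \<le> ennreal e"
    unfolding gam_norm_ext_def by (intro SUP_least) auto
qed

lemma ae_conv_subseq:
  fixes F :: "nat \<Rightarrow> real \<Rightarrow> complex" and s :: "nat \<Rightarrow> nat"
  assumes p: "1 \<le> p" and q: "1 \<le> q"
    and hL: "\<And>j. (\<lambda>x. F (s (Suc j)) x - F (s j) x) \<in> gam_space p q \<theta> K"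
    and hs: "\<And>j. gam_norm p q \<theta> K (\<lambda>x. F (s (Suc j)) x - F (s j) x) \<le> (1/4)^j"
  shows "AE x in lebesgue. x \<in> dom_am K \<longrightarrow> convergent (\<lambda>j. F (s j) x)"
proof -
  define h where "h j x = F (s (Suc j)) x - F (s j) x" for j x
  have pp: "p > 0" using p by simp
  have hm: "set_borel_measurable lebesgue (dom_am K) (h j)" for j
    using hL[of j] unfolding gam_space_def h_def by simp
  have hfin: "loc_int p (h j) k < \<infinity>" if "k \<in> K" for j k
    using hL[of j] that unfolding gam_space_def h_def by simp
  have hgam: "gam_norm_ext p q \<theta> K (h j) < \<infinity>" for j
    using hL[of j] unfolding gam_space_def h_def by simp
  define r where "r = (1/2::real) powr (1/p)"
  have r0: "0 \<le> r" and r1: "r < 1"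
  proof -
    show "0 \<le> r" by (simp add: r_def)
    have "(1/2::real) powr (1/p) < 1 powr (1/p)" using pp by (intro powr_less_mono2) auto
    then show "r < 1" by (simp add: r_def)
  qed
  have "AE x in lebesgue. x \<in> Ik k \<longrightarrow> convergent (\<lambda>j. F (s j) x)" if k: "k \<in> K" for k
  proof -
    have loc_le: "loc_int p (h j) k \<le> ennreal ((1/4)^j)" for j
    proof -
      have "enn2real (loc_int p (h j) k) \<le> (gam_norm p q \<theta> K (h j)) powr p"
        by (rule single_bound[OF p q hgam k])
      also have "\<dots> \<le> ((1/4)^j) powr p"
        using hs[of j] unfolding h_def using pp by (intro powr_mono2) (auto simp: gam_norm_def)
      also have "\<dots> \<le> ((1/4)^j) powr 1"
        using p by (intro powr_mono') (auto simp: power_le_one)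
      also have "\<dots> = (1/4)^j" by simp
      finally have "ennreal (enn2real (loc_int p (h j) k)) \<le> ennreal ((1/4)^j)" by (rule ennreal_leI)
      then show ?thesis using hfin[OF k, of j] by (auto simp: ennreal_enn2real_if split: if_splits)
    qed
    define w where "w j x = 2^j * uf K (h j) k x powr p" for j x
    have w0: "w j x \<ge> 0" for j x by (simp add: w_def)
    have wm: "(\<lambda>x. ennreal (w j x)) \<in> borel_measurable lebesgue" for j
      using uf_meas[OF hm[of j]] unfolding w_def by measurable
    have "(\<integral>\<^sup>+x. (\<Sum>j. ennreal (w j x)) \<partial>lebesgue) = (\<Sum>j. \<integral>\<^sup>+x. ennreal (w j x) \<partial>lebesgue)"
      by (rule nn_integral_suminf[OF wm])
    also have "\<dots> \<le> (\<Sum>j. ennreal ((1/2)^j))"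
    proof (intro suminf_le)
      fix j
      have "(\<integral>\<^sup>+x. ennreal (w j x) \<partial>lebesgue) = (\<integral>\<^sup>+x. ennreal (2^j) * ennreal (uf K (h j) k x powr p) \<partial>lebesgue)"
        unfolding w_def by (simp add: ennreal_mult)
      also have "\<dots> = ennreal (2^j) * loc_int p (h j) k"
        unfolding loc_int_uf[OF pp k] using uf_meas[OF hm[of j]]
        by (intro nn_integral_cmult) measurable
      also have "\<dots> \<le> ennreal (2^j) * ennreal ((1/4)^j)"
        by (intro mult_left_mono loc_le) auto
      also have "\<dots> = ennreal ((1/2)^j)"
        by (simp add: ennreal_mult[symmetric] power_mult_distrib[symmetric])
      finally show "(\<integral>\<^sup>+x. ennreal (w j x) \<partial>lebesgue) \<le> ennreal ((1/2)^j)" .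
    qed auto
    also have "\<dots> = ennreal (\<Sum>j. (1/2)^j)"
      by (intro suminf_ennreal2) auto
    finally have "(\<integral>\<^sup>+x. (\<Sum>j. ennreal (w j x)) \<partial>lebesgue) \<noteq> \<infinity>"
      by (auto simp: top_unique)
    then have "AE x in lebesgue. (\<Sum>j. ennreal (w j x)) \<noteq> \<infinity>"
      by (rule nn_integral_PInf_AE[OF borel_measurable_suminf_order[of "\<lambda>j x. ennreal (w j x)", OF wm]])
    then show ?thesis
    proof eventually_elim
      case (elim x)
      show ?case
      proof
        assume xI: "x \<in> Ik k"
        have "summable (\<lambda>j. w j x)" using elim w0 by (intro summable_suminf_not_top) auto
        then have "(\<lambda>j. w j x) \<longlonglongrightarrow> 0" by (rule summable_LIMSEQ_zero)
        then have "eventually (\<lambda>j. w j x < 1) sequentially"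
          by (rule order_tendstoD) simp
        then have ev: "eventually (\<lambda>j. norm (h j x) \<le> r ^ j) sequentially"
        proof eventually_elim
          case (elim j)
          define c where "c = cmod (h j x)"
          have c0: "c \<ge> 0" by (simp add: c_def)
          have "2^j * c powr p < 1" using elim xI unfolding w_def c_def by (simp add: uf_eq[OF k])
          then have "c powr p \<le> (1/2)^j" by (simp add: field_simps)
          then have "(c powr p) powr (1/p) \<le> ((1/2)^j) powr (1/p)"
            using pp by (intro powr_mono2) auto
          also have "(c powr p) powr (1/p) = c" using pp c0 by (simp add: powr_powr)
          also have "((1/2::real)^j) powr (1/p) = r ^ j"
            unfolding r_def by (simp add: powr_realpow[symmetric] powr_powr mult.commute)
          finally show ?case by (simp add: c_def)
        qed
        have "summable (\<lambda>j. h j x)"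
          by (rule summable_comparison_test_ev[OF ev]) (use r0 r1 in \<open>auto intro!: summable_geometric\<close>)
        then have "(\<lambda>j. \<Sum>i<j. h i x) \<longlonglongrightarrow> (\<Sum>j. h j x)" by (rule summable_LIMSEQ)
        then have "(\<lambda>j. F (s 0) x + (\<Sum>i<j. h i x)) \<longlonglongrightarrow> F (s 0) x + (\<Sum>j. h j x)"
          by (intro tendsto_intros)
        moreover have "F (s 0) x + (\<Sum>i<j. h i x) = F (s j) x" for j
          unfolding h_def using sum_lessThan_telescope[of "\<lambda>i. F (s i) x" j] by simp
        ultimately show "convergent (\<lambda>j. F (s j) x)" unfolding convergent_def by auto
      qed
    qed
  qed
  then have "AE x in lebesgue. \<forall>k\<in>K. x \<in> Ik k \<longrightarrow> convergent (\<lambda>j. F (s j) x)"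
    by (subst AE_ball_countable) auto
  then show ?thesis
    by eventually_elim (auto simp: dom_am_def)
qed

lemma L_add:
  assumes p: "1 \<le> p" and q: "1 \<le> q" and f: "f \<in> gam_space p q \<theta> K" and g: "g \<in> gam_space p q \<theta> K"
  shows "(\<lambda>x. f x + g x) \<in> gam_space p q \<theta> K"
proof -
  have fm: "set_borel_measurable lebesgue (dom_am K) f" and gm: "set_borel_measurable lebesgue (dom_am K) g"
    and ff: "\<forall>k\<in>K. loc_int p f k < \<infinity>" and gf: "\<forall>k\<in>K. loc_int p g k < \<infinity>"
    and fn: "gam_norm_ext p q \<theta> K f < \<infinity>" and gn: "gam_norm_ext p q \<theta> K g < \<infinity>"
    using f g by (auto simp: gam_space_def)
  note fm[unfolded set_borel_measurable_def, measurable] gm[unfolded set_borel_measurable_def, measurable]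
  have "(\<lambda>x. indicat_real (dom_am K) x *\<^sub>R f x + indicat_real (dom_am K) x *\<^sub>R g x) \<in> borel_measurable lebesgue"
    by measurable
  then have "set_borel_measurable lebesgue (dom_am K) (\<lambda>x. f x + g x)"
    unfolding set_borel_measurable_def by (simp add: scaleR_add_right)
  moreover have "\<forall>k\<in>K. loc_int p (\<lambda>x. f x + g x) k < \<infinity>"
  proof
    fix k assume k: "k \<in> K"
    have "loc_int p (\<lambda>x. f x + g x) k \<le> ennreal ((enn2real (loc_int p f k) powr (1/p) + enn2real (loc_int p g k) powr (1/p)) powr p)"
      using loc_int_minkowski[OF p k fm gm] ff gf k by auto
    then show "loc_int p (\<lambda>x. f x + g x) k < \<infinity>" by (rule le_less_trans) simp
  qed
  moreover have "gam_norm_ext p q \<theta> K (\<lambda>x. f x + g x) < \<infinity>"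
  proof -
    have "gam_norm_ext p q \<theta> K f + gam_norm_ext p q \<theta> K g < \<infinity>" using fn gn by (simp add: less_top)
    then show ?thesis using gam_tri[OF p q fm gm ff gf] by (rule le_less_trans[rotated])
  qed
  ultimately show ?thesis by (simp add: gam_space_def)
qed

lemma L_scal:
  assumes p: "1 \<le> p" and q: "1 \<le> q" and f: "f \<in> gam_space p q \<theta> K"
  shows "(\<lambda>x. c * f x) \<in> gam_space p q \<theta> K"
proof -
  have fm: "set_borel_measurable lebesgue (dom_am K) f"
    and ff: "\<forall>k\<in>K. loc_int p f k < \<infinity>" and fn: "gam_norm_ext p q \<theta> K f < \<infinity>"
    using f by (auto simp: gam_space_def)
  have eq: "(\<lambda>x. indicat_real (dom_am K) x *\<^sub>R (c * f x)) = (\<lambda>x. c * (indicat_real (dom_am K) x *\<^sub>R f x))"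
    by (auto simp: indicator_def)
  note fm[unfolded set_borel_measurable_def, measurable]
  have "(\<lambda>x. c * (indicat_real (dom_am K) x *\<^sub>R f x)) \<in> borel_measurable lebesgue" by measurable
  then have "set_borel_measurable lebesgue (dom_am K) (\<lambda>x. c * f x)"
    unfolding set_borel_measurable_def by (simp only: eq)
  moreover have "\<forall>k\<in>K. loc_int p (\<lambda>x. c * f x) k < \<infinity>"
  proof
    fix k assume k: "k \<in> K"
    have "ennreal (cmod c powr p) * loc_int p f k < \<infinity>" using ff k by (simp add: ennreal_mult_less_top)
    then show "loc_int p (\<lambda>x. c * f x) k < \<infinity>" by (simp only: loc_int_scal[OF p fm k])
  qed
  moreover have "gam_norm_ext p q \<theta> K (\<lambda>x. c * f x) < \<infinity>"
  proof -
    have "ennreal (cmod c) * gam_norm_ext p q \<theta> K f < \<infinity>" using fn by (simp add: ennreal_mult_less_top)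
    then show ?thesis by (simp only: gam_scal[OF p q fm])
  qed
  ultimately show ?thesis by (simp add: gam_space_def)
qed

lemma L_diff:
  assumes p: "1 \<le> p" and q: "1 \<le> q" and f: "f \<in> gam_space p q \<theta> K" and g: "g \<in> gam_space p q \<theta> K"
  shows "(\<lambda>x. f x - g x) \<in> gam_space p q \<theta> K"
proof -
  have "(\<lambda>x. f x + (-1) * g x) \<in> gam_space p q \<theta> K"
    by (intro L_add[OF p q f] L_scal[OF p q g])
  then show ?thesis by simp
qed

fun subsq :: "(nat \<Rightarrow> nat) \<Rightarrow> nat \<Rightarrow> nat" where
  "subsq M 0 = M 0"
| "subsq M (Suc j) = max (M (Suc j)) (Suc (subsq M j))"

lemma subsq_ge: "M j \<le> subsq M j" "j \<le> subsq M j" "subsq M j < subsq M (Suc j)"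
  by (induction j) auto

lemma complete_gam:
  fixes F :: "nat \<Rightarrow> real \<Rightarrow> complex"
  assumes p: "1 \<le> p" and q: "1 \<le> q" and FL: "\<forall>n. F n \<in> gam_space p q \<theta> K"
    and cau: "\<forall>e>0. \<exists>M. \<forall>m\<ge>M. \<forall>n\<ge>M. gam_norm p q \<theta> K (\<lambda>x. F m x - F n x) < e"
  shows "\<exists>g\<in>gam_space p q \<theta> K. (\<lambda>n. gam_norm p q \<theta> K (\<lambda>x. F n x - g x)) \<longlonglongrightarrow> 0"
proof -
  have "\<forall>j. \<exists>M. \<forall>m\<ge>M. \<forall>n\<ge>M. gam_norm p q \<theta> K (\<lambda>x. F m x - F n x) < (1/4)^j"
    using cau by simp
  then have "\<exists>M. \<forall>j. \<forall>m\<ge>M j. \<forall>n\<ge>M j. gam_norm p q \<theta> K (\<lambda>x. F m x - F n x) < (1/4)^j"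
    by (rule choice)
  then obtain M where M: "\<forall>j. \<forall>m\<ge>M j. \<forall>n\<ge>M j. gam_norm p q \<theta> K (\<lambda>x. F m x - F n x) < (1/4)^j"
    by (elim exE)
  define s where "s = subsq M"
  have hL: "(\<lambda>x. F (s (Suc j)) x - F (s j) x) \<in> gam_space p q \<theta> K" for j
    using FL by (intro L_diff[OF p q]) auto
  have hs: "gam_norm p q \<theta> K (\<lambda>x. F (s (Suc j)) x - F (s j) x) \<le> (1/4)^j" for j
  proof -
    have "s j \<ge> M j" "s (Suc j) \<ge> M j" using subsq_ge[where M=M and j=j] by (auto simp: s_def)
    then show ?thesis using M[rule_format, of j "s (Suc j)" "s j"] by (simp add: less_imp_le)
  qed
  have aec: "AE x in lebesgue. x \<in> dom_am K \<longrightarrow> convergent (\<lambda>j. F (s j) x)"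
    by (rule ae_conv_subseq[where F=F and s=s, OF p q hL hs])
  define g where "g x = lim (\<lambda>j. indicat_real (dom_am K) x *\<^sub>R F (s j) x)" for x
  have Fm: "(\<lambda>x. indicat_real (dom_am K) x *\<^sub>R F n x) \<in> borel_measurable lebesgue" for n
    using FL unfolding gam_space_def set_borel_measurable_def by auto
  have gm: "g \<in> borel_measurable lebesgue"
    unfolding g_def by (rule borel_measurable_lim_metric) (rule Fm)
  have gout: "indicat_real (dom_am K) x *\<^sub>R g x = g x" for x
    by (cases "x \<in> dom_am K") (auto simp: g_def limI)
  have gconv: "AE x in lebesgue. x \<in> dom_am K \<longrightarrow> (\<lambda>j. F (s j) x) \<longlonglongrightarrow> g x"
    using aec
  proof eventually_elim
    case (elim x)
    show ?case
    proof
      assume x: "x \<in> dom_am K"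
      then have "g x = lim (\<lambda>j. F (s j) x)" by (simp add: g_def)
      then show "(\<lambda>j. F (s j) x) \<longlonglongrightarrow> g x" using elim x by (simp add: convergent_LIMSEQ_iff)
    qed
  qed
  have key: "(\<lambda>x. F n x - g x) \<in> gam_space p q \<theta> K \<and> gam_norm_ext p q \<theta> K (\<lambda>x. F n x - g x) \<le> ennreal e"
    if e: "e > 0" and n: "\<forall>m\<ge>Me. \<forall>n\<ge>Me. gam_norm p q \<theta> K (\<lambda>x. F m x - F n x) < e" and nM: "n \<ge> Me"
    for e n Me
  proof -
    define H where "H j x = F n x - F (s j) x" for j x
    have HL: "H j \<in> gam_space p q \<theta> K" for j
      unfolding H_def using FL by (intro L_diff[OF p q]) auto
    have Hm: "set_borel_measurable lebesgue (dom_am K) (H j)" for j using HL[of j] by (simp add: gam_space_def)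
    have Hf: "\<forall>k\<in>K. loc_int p (H j) k < \<infinity>" for j using HL[of j] by (simp add: gam_space_def)
    have conv: "AE x in lebesgue. x \<in> dom_am K \<longrightarrow> (\<lambda>j. H j x) \<longlonglongrightarrow> F n x - g x"
      using gconv by eventually_elim (auto simp: H_def intro: tendsto_diff)
    have bound: "eventually (\<lambda>j. gam_norm_ext p q \<theta> K (H j) \<le> ennreal e) sequentially"
      using eventually_ge_at_top[of Me]
    proof eventually_elim
      case (elim j)
      then have "s j \<ge> Me" using subsq_ge(2)[where M=M and j=j] by (simp add: s_def)
      then have "gam_norm p q \<theta> K (\<lambda>x. F n x - F (s j) x) < e" using n nM by simp
      then have "gam_norm p q \<theta> K (H j) < e" unfolding H_def .
      moreover have "gam_norm_ext p q \<theta> K (H j) < \<infinity>" using HL[of j] by (simp add: gam_space_def)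
      ultimately show ?case unfolding gam_norm_def
        using ennreal_leI[of "enn2real (gam_norm_ext p q \<theta> K (H j))" e] by (simp add: ennreal_enn2real)
    qed
    have R: "\<forall>k\<in>K. loc_int p (\<lambda>x. F n x - g x) k < \<infinity>" "gam_norm_ext p q \<theta> K (\<lambda>x. F n x - g x) \<le> ennreal e"
      using fatou_gam[OF p q Hm Hf conv bound] e by auto
    have "(\<lambda>x. indicat_real (dom_am K) x *\<^sub>R (F n x - g x)) = (\<lambda>x. indicat_real (dom_am K) x *\<^sub>R F n x - g x)"
      using gout by (auto simp: scaleR_diff_right)
    then have "set_borel_measurable lebesgue (dom_am K) (\<lambda>x. F n x - g x)"
      unfolding set_borel_measurable_def using Fm[of n] gm by simp
    moreover have "gam_norm_ext p q \<theta> K (\<lambda>x. F n x - g x) < \<infinity>" using R(2) by (rule le_less_trans) simp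
    ultimately show ?thesis using R by (simp add: gam_space_def)
  qed
  obtain M1 where M1: "\<forall>m\<ge>M1. \<forall>n\<ge>M1. gam_norm p q \<theta> K (\<lambda>x. F m x - F n x) < 1"
    using cau[rule_format, OF zero_less_one] by (elim exE)
  have "(\<lambda>x. F M1 x - (F M1 x - g x)) \<in> gam_space p q \<theta> K"
  proof -
    have hL1: "(\<lambda>x. F M1 x - g x) \<in> gam_space p q \<theta> K" using key[OF zero_less_one M1 order_refl] by simp
    have "F M1 \<in> gam_space p q \<theta> K" using FL by simp
    from L_diff[OF p q this hL1] show ?thesis .
  qed
  then have gL: "g \<in> gam_space p q \<theta> K" by simp
  have "(\<lambda>n. gam_norm p q \<theta> K (\<lambda>x. F n x - g x)) \<longlonglongrightarrow> 0"
  proof (rule LIMSEQ_I)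
    fix r :: real assume r: "r > 0"
    then obtain Me where Me: "\<forall>m\<ge>Me. \<forall>n\<ge>Me. gam_norm p q \<theta> K (\<lambda>x. F m x - F n x) < r/2"
      using cau[rule_format, of "r/2"] r by auto
    show "\<exists>no. \<forall>n\<ge>no. norm (gam_norm p q \<theta> K (\<lambda>x. F n x - g x) - 0) < r"
    proof (intro exI allI impI)
      fix n assume "n \<ge> Me"
      then have "gam_norm_ext p q \<theta> K (\<lambda>x. F n x - g x) \<le> ennreal (r/2)"
        using key[where e="r/2" and Me=Me and n=n] r Me by simp
      then have "gam_norm p q \<theta> K (\<lambda>x. F n x - g x) \<le> r/2"
        unfolding gam_norm_def using r enn2real_mono[of "gam_norm_ext p q \<theta> K (\<lambda>x. F n x - g x)" "ennreal (r/2)"]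
        by simp
      then show "norm (gam_norm p q \<theta> K (\<lambda>x. F n x - g x) - 0) < r"
        using r by (simp add: gam_norm_def)
    qed
  qed
  then show ?thesis using gL by blast
qed

theorem theorem2p4:
  fixes p q \<theta> :: real and K :: "int set"
  assumes "\<theta> > 0" and "1 \<le> p" and "1 \<le> q" and "admissible_index K"
  defines "L \<equiv> gam_space p q \<theta> K" and "N \<equiv> gam_norm p q \<theta> K"
  shows
    "(\<lambda>x. 0) \<in> L
     \<and> (\<forall>f\<in>L. \<forall>g\<in>L. (\<lambda>x. f x + g x) \<in> L)
     \<and> (\<forall>f\<in>L. \<forall>c::complex. (\<lambda>x. c * f x) \<in> L)
     \<and> (\<forall>f\<in>L. \<forall>g. set_borel_measurable lebesgue (dom_am K) g \<and> ae_eq_on K f g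
            \<longrightarrow> g \<in> L \<and> N g = N f)
     \<and> (\<forall>f\<in>L. N f = 0 \<longleftrightarrow> ae_eq_on K f (\<lambda>x. 0))
     \<and> (\<forall>f\<in>L. \<forall>c::complex. N (\<lambda>x. c * f x) = cmod c * N f)
     \<and> (\<forall>f\<in>L. \<forall>g\<in>L. N (\<lambda>x. f x + g x) \<le> N f + N g)
     \<and> (\<forall>F :: nat \<Rightarrow> real \<Rightarrow> complex. (\<forall>n. F n \<in> L) \<longrightarrow>
          (\<forall>e>0. \<exists>M. \<forall>m\<ge>M. \<forall>n\<ge>M. N (\<lambda>x. F m x - F n x) < e) \<longrightarrow>
          (\<exists>g\<in>L. (\<lambda>n. N (\<lambda>x. F n x - g x)) \<longlonglongrightarrow> 0))"
proof -
  have p: "1 \<le> p" and q: "1 \<le> q" using assms by auto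
  have pp: "p > 0" using p by simp
  have c1: "(\<lambda>x. 0) \<in> L"
  proof -
    have "set_borel_measurable lebesgue (dom_am K) (\<lambda>x. 0::complex)"
      unfolding set_borel_measurable_def by simp
    then show ?thesis unfolding L_def gam_space_def using pp by (simp add: loc_int_zero gam_zero)
  qed
  have c2: "\<forall>f\<in>L. \<forall>g\<in>L. (\<lambda>x. f x + g x) \<in> L"
    unfolding L_def using L_add[OF p q] by blast
  have c3: "\<forall>f\<in>L. \<forall>c::complex. (\<lambda>x. c * f x) \<in> L"
    unfolding L_def using L_scal[OF p q] by blast
  have c4: "\<forall>f\<in>L. \<forall>g. set_borel_measurable lebesgue (dom_am K) g \<and> ae_eq_on K f g \<longrightarrow> g \<in> L \<and> N g = N f"
  proof (intro ballI allI impI)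
    fix f g assume f: "f \<in> L" and g: "set_borel_measurable lebesgue (dom_am K) g \<and> ae_eq_on K f g"
    have loc: "\<forall>k\<in>K. loc_int p f k = loc_int p g k" using g loc_int_ae by blast
    then have "gam_norm_ext p q \<theta> K f = gam_norm_ext p q \<theta> K g" by (rule gam_cong)
    then show "g \<in> L \<and> N g = N f" using f g loc unfolding L_def N_def gam_space_def gam_norm_def by auto
  qed
  have c5: "\<forall>f\<in>L. N f = 0 \<longleftrightarrow> ae_eq_on K f (\<lambda>x. 0)"
  proof (intro ballI iffI)
    fix f assume f: "f \<in> L" and "N f = 0"
    then show "ae_eq_on K f (\<lambda>x. 0)"
      using zero_norm_ae[OF p q] unfolding L_def N_def gam_space_def by blast
  next
    fix f assume f: "f \<in> L" and ae: "ae_eq_on K f (\<lambda>x. 0)"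
    have "\<forall>k\<in>K. loc_int p f k = loc_int p (\<lambda>x. 0) k" using ae loc_int_ae by blast
    then have "gam_norm_ext p q \<theta> K f = gam_norm_ext p q \<theta> K (\<lambda>x. 0)" by (rule gam_cong)
    then show "N f = 0" using pp unfolding N_def gam_norm_def by (simp add: gam_zero)
  qed
  have c6: "\<forall>f\<in>L. \<forall>c::complex. N (\<lambda>x. c * f x) = cmod c * N f"
  proof (intro ballI allI)
    fix f c assume "f \<in> L"
    then have fm: "set_borel_measurable lebesgue (dom_am K) f" unfolding L_def gam_space_def by simp
    show "N (\<lambda>x. c * f x) = cmod c * N f"
      unfolding N_def gam_norm_def gam_scal[OF p q fm] by (simp add: enn2real_mult)
  qed
  have c7: "\<forall>f\<in>L. \<forall>g\<in>L. N (\<lambda>x. f x + g x) \<le> N f + N g"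
  proof (intro ballI)
    fix f g assume f: "f \<in> L" and g: "g \<in> L"
    have fm: "set_borel_measurable lebesgue (dom_am K) f" and gm: "set_borel_measurable lebesgue (dom_am K) g"
      and ff: "\<forall>k\<in>K. loc_int p f k < \<infinity>" and gf: "\<forall>k\<in>K. loc_int p g k < \<infinity>"
      and fn: "gam_norm_ext p q \<theta> K f < \<infinity>" and gn: "gam_norm_ext p q \<theta> K g < \<infinity>"
      using f g by (auto simp: L_def gam_space_def)
    have "enn2real (gam_norm_ext p q \<theta> K (\<lambda>x. f x + g x)) \<le> enn2real (gam_norm_ext p q \<theta> K f + gam_norm_ext p q \<theta> K g)"
      using gam_tri[OF p q fm gm ff gf] fn gn by (intro enn2real_mono) (auto simp: less_top)
    also have "\<dots> = N f + N g" unfolding N_def gam_norm_def using fn gn by (simp add: enn2real_plus)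
    finally show "N (\<lambda>x. f x + g x) \<le> N f + N g" unfolding N_def gam_norm_def .
  qed
  have c8: "\<forall>F :: nat \<Rightarrow> real \<Rightarrow> complex. (\<forall>n. F n \<in> L) \<longrightarrow>
          (\<forall>e>0. \<exists>M. \<forall>m\<ge>M. \<forall>n\<ge>M. N (\<lambda>x. F m x - F n x) < e) \<longrightarrow>
          (\<exists>g\<in>L. (\<lambda>n. N (\<lambda>x. F n x - g x)) \<longlonglongrightarrow> 0)"
    unfolding L_def N_def using complete_gam[OF p q] by blast
  show ?thesis using c1 c2 c3 c4 c5 c6 c7 c8 by blast
qed

end
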